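(* Let $d\ge 7$ and let $G$ be a $d$-regular graph with girth $g(G)=5$. If there exists a vertex of $G$ that lies on no cycle of length $6$ in $G$, then $\chi_b(G)=d+1$.
   Context: The girth $g(G)$ is the length of a shortest cycle of $G$. A proper $k$-coloring $c:V(G)\to\{1,\dots,k\}$ is a b-coloring if every color class contains a vertex $v$ whose closed neighborhood $N[v]$ contains all $k$ colors. The b-chromatic number $\chi_b(G)$ is the largest $k$ such that $G$ admits a b-coloring with $k$ colors. *)

theory Defs
  imports Main "HOL-Library.Extended_Nat"
begin

definition simple_graph :: "'a set \<Rightarrow> ('a \<Rightarrow> 'a \<Rightarrow> bool) \<Rightarrow> bool" where
  "simple_graph V E \<longleftrightarrow> finite V \<and>
     (\<forall>u v. E u v \<longrightarrow> u \<in> V \<and> v \<in> V) \<and>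
     (\<forall>u v. E u v \<longrightarrow> E v u) \<and> (\<forall>v. \<not> E v v)"

definition neighbours :: "'a set \<Rightarrow> ('a \<Rightarrow> 'a \<Rightarrow> bool) \<Rightarrow> 'a \<Rightarrow> 'a set" where
  "neighbours V E v = {u \<in> V. E v u}"

definition closed_nbhd :: "'a set \<Rightarrow> ('a \<Rightarrow> 'a \<Rightarrow> bool) \<Rightarrow> 'a \<Rightarrow> 'a set" where
  "closed_nbhd V E v = insert v (neighbours V E v)"

definition regular :: "'a set \<Rightarrow> ('a \<Rightarrow> 'a \<Rightarrow> bool) \<Rightarrow> nat \<Rightarrow> bool" where
  "regular V E d \<longleftrightarrow> (\<forall>v\<in>V. card (neighbours V E v) = d)"

definition is_cycle :: "'a set \<Rightarrow> ('a \<Rightarrow> 'a \<Rightarrow> bool) \<Rightarrow> 'a list \<Rightarrow> bool" where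
  "is_cycle V E xs \<longleftrightarrow> length xs \<ge> 3 \<and> distinct xs \<and> set xs \<subseteq> V \<and>
     (\<forall>i < length xs. E (xs ! i) (xs ! ((i + 1) mod length xs)))"

definition has_cycle_of_length :: "'a set \<Rightarrow> ('a \<Rightarrow> 'a \<Rightarrow> bool) \<Rightarrow> nat \<Rightarrow> bool" where
  "has_cycle_of_length V E k \<longleftrightarrow> (\<exists>xs. is_cycle V E xs \<and> length xs = k)"

definition girth :: "'a set \<Rightarrow> ('a \<Rightarrow> 'a \<Rightarrow> bool) \<Rightarrow> enat" where
  "girth V E = (if \<exists>k. has_cycle_of_length V E k
                then enat (LEAST k. has_cycle_of_length V E k) else \<infinity>)"

definition on_cycle_of_length :: "'a set \<Rightarrow> ('a \<Rightarrow> 'a \<Rightarrow> bool) \<Rightarrow> nat \<Rightarrow> 'a \<Rightarrow> bool" where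
  "on_cycle_of_length V E k v \<longleftrightarrow> (\<exists>xs. is_cycle V E xs \<and> length xs = k \<and> v \<in> set xs)"

definition proper_coloring :: "'a set \<Rightarrow> ('a \<Rightarrow> 'a \<Rightarrow> bool) \<Rightarrow> nat \<Rightarrow> ('a \<Rightarrow> nat) \<Rightarrow> bool" where
  "proper_coloring V E k c \<longleftrightarrow> (\<forall>v\<in>V. c v \<in> {1..k}) \<and>
     (\<forall>u\<in>V. \<forall>v\<in>V. E u v \<longrightarrow> c u \<noteq> c v)"

definition b_coloring :: "'a set \<Rightarrow> ('a \<Rightarrow> 'a \<Rightarrow> bool) \<Rightarrow> nat \<Rightarrow> ('a \<Rightarrow> nat) \<Rightarrow> bool" where
  "b_coloring V E k c \<longleftrightarrow> proper_coloring V E k c \<and>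
     (\<forall>i\<in>{1..k}. \<exists>v\<in>V. c v = i \<and> c ` closed_nbhd V E v = {1..k})"

definition b_chromatic_number :: "'a set \<Rightarrow> ('a \<Rightarrow> 'a \<Rightarrow> bool) \<Rightarrow> nat" where
  "b_chromatic_number V E = Max {k. \<exists>c. b_coloring V E k c}"

end

theory Submission
  imports Defs
begin

lemma bij_upd: "bij_betw f A B \<Longrightarrow> a \<notin> A \<Longrightarrow> b \<notin> B \<Longrightarrow> bij_betw (f(a:=b)) (insert a A) (insert b B)"
  unfolding bij_betw_def inj_on_def by (auto simp: image_def)

lemma avoid_n:
  "finite C \<Longrightarrow> card C = n + 2 \<Longrightarrow> card A = card C \<Longrightarrow>
   (\<forall>w\<in>A. \<forall>a b. forb w a \<longrightarrow> forb w b \<longrightarrow> a = b) \<Longrightarrow> \<not>(\<exists>x\<in>C. \<forall>w\<in>A. forb w x) \<Longrightarrow>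
   \<exists>\<sigma>. bij_betw \<sigma> A C \<and> (\<forall>w\<in>A. \<not> forb w (\<sigma> w))"
proof (induction n arbitrary: A C)
  case 0
  have "card C = 2" "card A = 2" using 0 by simp_all
  then obtain x y a b where C: "C = {x,y}" "x \<noteq> y" and A: "A = {a,b}" "a \<noteq> b" by (meson card_2_iff)
  define s1 where "s1 = (\<lambda>z. if z = a then x else y)"
  define s2 where "s2 = (\<lambda>z. if z = a then y else x)"
  have b1: "bij_betw s1 A C" using A C unfolding s1_def bij_betw_def inj_on_def by auto
  have b2: "bij_betw s2 A C" using A C unfolding s2_def bij_betw_def inj_on_def by auto
  show ?case
  proof (cases "\<not> forb a x \<and> \<not> forb b y")
    case True
    then show ?thesis using b1 A unfolding s1_def by auto
  next
    case False
    have "\<not> forb a y \<and> \<not> forb b x"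
      using False 0(4,5) A C by blast
    then show ?thesis using b2 A A unfolding s2_def by auto
  qed
next
  case (Suc n)
  have "A \<noteq> {}" using Suc by auto
  then obtain a where a: "a \<in> A" by auto
  define A' where "A' = A - {a}"
  have finA: "finite A" using Suc by (metis card_eq_0_iff add_is_0 zero_neq_numeral)
  have cA': "card A' = n + 2" using Suc a finA unfolding A'_def by simp
  have A'ne: "A' \<noteq> {}" using cA' by auto
  obtain x where x: "x \<in> C" "\<not> forb a x"
    "\<not>(\<exists>z\<in>C - {x}. \<forall>w\<in>A'. forb w z)"
  proof (cases "\<exists>c\<in>C. \<forall>w\<in>A'. forb w c")
    case True
    then obtain c where c: "c \<in> C" "\<forall>w\<in>A'. forb w c" by auto
    have "\<not> forb a c" using Suc.prems(5) c a unfolding A'_def by blast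
    moreover have "\<not>(\<exists>z\<in>C - {c}. \<forall>w\<in>A'. forb w z)"
      using c A'ne Suc.prems(4) unfolding A'_def by blast
    ultimately show ?thesis using that c by blast
  next
    case False
    have "card C \<ge> 2" using Suc by simp
    then have "\<not> (\<forall>a1\<in>C. \<forall>a2\<in>C. a1 = a2)"
      using card_le_Suc0_iff_eq[OF Suc.prems(1)] by simp
    then obtain y1 y2 where "y1 \<in> C" "y2 \<in> C" "y1 \<noteq> y2" by blast
    then obtain y where "y \<in> C" "\<not> forb a y" using Suc.prems(4) a by blast
    then show ?thesis using that False by blast
  qed
  have "\<exists>\<sigma>. bij_betw \<sigma> A' (C - {x}) \<and> (\<forall>w\<in>A'. \<not> forb w (\<sigma> w))"
    apply (rule Suc.IH)
    using Suc.prems x cA' unfolding A'_def by auto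
  then obtain \<sigma> where s: "bij_betw \<sigma> A' (C - {x})" "\<forall>w\<in>A'. \<not> forb w (\<sigma> w)" by blast
  have "bij_betw (\<sigma>(a:=x)) (insert a A') (insert x (C - {x}))"
    by (rule bij_upd[OF s(1)]) (auto simp: A'_def)
  moreover have "insert a A' = A" "insert x (C - {x}) = C" using a x unfolding A'_def by auto
  ultimately show ?case using s(2) x unfolding A'_def by (intro exI[of _ "\<sigma>(a:=x)"]) (auto simp del: fun_upd_apply, auto split: if_splits)
qed

lemma avoid:
  "finite C \<Longrightarrow> card C \<ge> 2 \<Longrightarrow> card A = card C \<Longrightarrow>
   (\<forall>w\<in>A. \<forall>a b. forb w a \<longrightarrow> forb w b \<longrightarrow> a = b) \<Longrightarrow> \<not>(\<exists>x\<in>C. \<forall>w\<in>A. forb w x) \<Longrightarrow>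
   \<exists>\<sigma>. bij_betw \<sigma> A C \<and> (\<forall>w\<in>A. \<not> forb w (\<sigma> w))"
  using avoid_n[of C "card C - 2" A forb] by simp

lemma greedy_aux:
  assumes sg: "simple_graph V E" and deg: "\<forall>x\<in>V. card (neighbours V E x) < k"
  shows "finite T \<Longrightarrow> T \<subseteq> V \<Longrightarrow> S \<subseteq> V \<Longrightarrow> (\<forall>x\<in>S. c x \<in> {1..k}) \<Longrightarrow>
    (\<forall>x\<in>S. \<forall>y\<in>S. E x y \<longrightarrow> c x \<noteq> c y) \<Longrightarrow>
    \<exists>c'. (\<forall>x\<in>S\<union>T. c' x \<in> {1..k}) \<and> (\<forall>x\<in>S\<union>T. \<forall>y\<in>S\<union>T. E x y \<longrightarrow> c' x \<noteq> c' y) \<and> (\<forall>x\<in>S. c' x = c x)"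
proof (induction T rule: finite_induct)
  case empty
  then show ?case by auto
next
  case (insert x T)
  then obtain c' where c': "\<forall>x\<in>S\<union>T. c' x \<in> {1..k}" "\<forall>x\<in>S\<union>T. \<forall>y\<in>S\<union>T. E x y \<longrightarrow> c' x \<noteq> c' y" "\<forall>x\<in>S. c' x = c x"
    by auto
  show ?case
  proof (cases "x \<in> S")
    case True
    then have "S \<union> insert x T = S \<union> T" by auto
    then show ?thesis using c' by metis
  next
    case False
    have xV: "x \<in> V" using insert by auto
    have finV: "finite V" using sg unfolding simple_graph_def by auto
    let ?nb = "neighbours V E x"
    have fnb: "finite ?nb" using finV unfolding neighbours_def by auto
    have "card (c' ` ?nb) < k" using card_image_le[OF fnb, of c'] deg xV le_less_trans by blast
    then have "\<not> {1..k} \<subseteq> c' ` ?nb"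
      using card_mono[OF finite_imageI[OF fnb]] by fastforce
    then obtain col where col: "col \<in> {1..k}" "col \<notin> c' ` ?nb" by blast
    define c'' where "c'' = c'(x := col)"
    have sym: "\<And>a b. E a b \<Longrightarrow> E b a" and irr: "\<And>a. \<not> E a a" and inV: "\<And>a b. E a b \<Longrightarrow> b \<in> V"
      using sg unfolding simple_graph_def by blast+
    have "\<forall>y\<in>S\<union>T. E x y \<longrightarrow> c' y \<noteq> col"
      using col unfolding neighbours_def by (auto intro: inV)
    note nc = this
    have 1: "\<forall>z\<in>S\<union>insert x T. c'' z \<in> {1..k}" using c' col unfolding c''_def by auto
    have 2: "\<forall>z\<in>S. c'' z = c z" using c' False unfolding c''_def by auto
    have 3: "\<forall>z\<in>S\<union>insert x T. \<forall>y\<in>S\<union>insert x T. E z y \<longrightarrow> c'' z \<noteq> c'' y"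
    proof (intro ballI impI)
      fix z y assume z: "z \<in> S\<union>insert x T" and y: "y \<in> S\<union>insert x T" and e: "E z y"
      show "c'' z \<noteq> c'' y"
      proof (cases "z = x")
        case True
        then have "y \<noteq> x" using e irr by auto
        then show ?thesis using True y e nc unfolding c''_def by auto
      next
        case zx: False
        show ?thesis
        proof (cases "y = x")
          case True
          then show ?thesis using zx z e nc sym unfolding c''_def by fastforce
        next
          case False
          then show ?thesis using zx z y e c'(2) unfolding c''_def by auto
        qed
      qed
    qed
    show ?thesis using 1 2 3 by blast
  qed
qed

lemma greedy:
  assumes sg: "simple_graph V E" and deg: "\<forall>x\<in>V. card (neighbours V E x) < k"
    and "S \<subseteq> V" "\<forall>x\<in>S. c x \<in> {1..k}" "\<forall>x\<in>S. \<forall>y\<in>S. E x y \<longrightarrow> c x \<noteq> c y"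
  shows "\<exists>c'. proper_coloring V E k c' \<and> (\<forall>x\<in>S. c' x = c x)"
proof -
  have finV: "finite V" using sg unfolding simple_graph_def by auto
  have "S \<union> (V - S) = V" using assms by auto
  then show ?thesis using greedy_aux[OF sg deg, of "V - S" S c] finV assms
    unfolding proper_coloring_def by auto
qed

locale G5 =
  fixes V :: "'a set" and E :: "'a \<Rightarrow> 'a \<Rightarrow> bool" and d :: nat and v0 :: 'a
  assumes sg: "simple_graph V E" and reg: "regular V E d" and d3: "d \<ge> 3"
    and no3: "\<not> has_cycle_of_length V E 3" and no4: "\<not> has_cycle_of_length V E 4"
    and v0V: "v0 \<in> V" and no6: "\<not> on_cycle_of_length V E 6 v0"
begin

lemma sym: "E a b \<Longrightarrow> E b a" and irr: "\<not> E a a" and inV1: "E a b \<Longrightarrow> a \<in> V" and inV2: "E a b \<Longrightarrow> b \<in> V"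
  using sg unfolding simple_graph_def by blast+

lemma finV: "finite V" using sg unfolding simple_graph_def by blast

lemma tri: "E a b \<Longrightarrow> E b c \<Longrightarrow> E c a \<Longrightarrow> False"
proof -
  assume e: "E a b" "E b c" "E c a"
  have "a \<noteq> b" "b \<noteq> c" "c \<noteq> a" using e irr by metis+
  moreover have "\<forall>i<length [a,b,c]. E ([a,b,c]!i) ([a,b,c]!((i+1) mod length [a,b,c]))"
  proof (intro allI impI)
    fix i assume "i < length [a,b,c]"
    then have "i = 0 \<or> i = 1 \<or> i = 2" by auto
    then show "E ([a,b,c]!i) ([a,b,c]!((i+1) mod length [a,b,c]))" using e by auto
  qed
  moreover have "set [a,b,c] \<subseteq> V" using e inV1 by auto
  ultimately have "is_cycle V E [a,b,c]" unfolding is_cycle_def by simp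
  then show False using no3 unfolding has_cycle_of_length_def by force
qed

lemma sq: "E a b \<Longrightarrow> E b c \<Longrightarrow> E c e \<Longrightarrow> E e a \<Longrightarrow> a \<noteq> c \<Longrightarrow> b \<noteq> e \<Longrightarrow> False"
proof -
  assume e: "E a b" "E b c" "E c e" "E e a" "a \<noteq> c" "b \<noteq> e"
  have "a \<noteq> b" "b \<noteq> c" "c \<noteq> e" "e \<noteq> a" using e irr by metis+
  moreover have "\<forall>i<length [a,b,c,e]. E ([a,b,c,e]!i) ([a,b,c,e]!((i+1) mod length [a,b,c,e]))"
  proof (intro allI impI)
    fix i assume "i < length [a,b,c,e]"
    then have "i = 0 \<or> i = 1 \<or> i = 2 \<or> i = 3" by auto
    then show "E ([a,b,c,e]!i) ([a,b,c,e]!((i+1) mod length [a,b,c,e]))" using e by auto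
  qed
  moreover have "set [a,b,c,e] \<subseteq> V" using e inV1 by auto
  ultimately have "is_cycle V E [a,b,c,e]" using e(5,6) unfolding is_cycle_def by simp
  then show False using no4 unfolding has_cycle_of_length_def by force
qed

lemma hex: "E v0 a \<Longrightarrow> E a b \<Longrightarrow> E b c \<Longrightarrow> E c e \<Longrightarrow> E e f \<Longrightarrow> E f v0 \<Longrightarrow>
   distinct [v0,a,b,c,e,f] \<Longrightarrow> False"
proof -
  assume e: "E v0 a" "E a b" "E b c" "E c e" "E e f" "E f v0" "distinct [v0,a,b,c,e,f]"
  moreover have "\<forall>i<length [v0,a,b,c,e,f]. E ([v0,a,b,c,e,f]!i) ([v0,a,b,c,e,f]!((i+1) mod length [v0,a,b,c,e,f]))"
  proof (intro allI impI)
    fix i assume "i < length [v0,a,b,c,e,f]"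
    then have "i = 0 \<or> i = 1 \<or> i = 2 \<or> i = 3 \<or> i = 4 \<or> i = 5" by auto
    then show "E ([v0,a,b,c,e,f]!i) ([v0,a,b,c,e,f]!((i+1) mod length [v0,a,b,c,e,f]))" using e by auto
  qed
  moreover have "set [v0,a,b,c,e,f] \<subseteq> V" using e inV1 by auto
  ultimately have "is_cycle V E [v0,a,b,c,e,f]" using e(7) unfolding is_cycle_def by simp
  then show False using no6 unfolding on_cycle_of_length_def by force
qed

definition N where "N = neighbours V E v0"
definition A where "A u = neighbours V E u - {v0}"

lemma memN: "u \<in> N \<longleftrightarrow> E v0 u" unfolding N_def neighbours_def using inV2 by auto
lemma memA: "w \<in> A u \<longleftrightarrow> E u w \<and> w \<noteq> v0" unfolding A_def neighbours_def using inV2 by auto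

lemma finN: "finite N" unfolding N_def neighbours_def using finV by auto
lemma cardN: "card N = d" unfolding N_def using reg v0V unfolding regular_def by auto
lemma NV: "N \<subseteq> V" unfolding N_def neighbours_def by auto
lemma AV: "A u \<subseteq> V" unfolding A_def neighbours_def by auto
lemma finA: "finite (A u)" using AV finV finite_subset by blast

lemma cardA: "u \<in> N \<Longrightarrow> card (A u) = d - 1"
proof -
  assume u: "u \<in> N"
  then have uV: "u \<in> V" using NV by auto
  have "v0 \<in> neighbours V E u" using u v0V sym unfolding memN neighbours_def by auto
  moreover have "finite (neighbours V E u)" using finV unfolding neighbours_def by auto
  ultimately show ?thesis using reg uV unfolding A_def regular_def by auto
qed

lemma F1: "u \<in> N \<Longrightarrow> w \<in> A u \<Longrightarrow> w \<notin> N"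
  using tri sym unfolding memN memA by blast

lemma F2: "u \<in> N \<Longrightarrow> u' \<in> N \<Longrightarrow> u \<noteq> u' \<Longrightarrow> w \<in> A u \<Longrightarrow> w \<notin> A u'"
  using sq sym unfolding memN memA by metis

lemma F3: "w \<in> A u \<Longrightarrow> w' \<in> A u \<Longrightarrow> \<not> E w w'"
  using tri sym unfolding memA by metis

lemma F4:
  assumes "u \<in> N" "u1 \<in> N" "u2 \<in> N" "w \<in> A u" "w1 \<in> A u1" "w2 \<in> A u2" "E w w1" "E w w2"
  shows "w1 = w2"
proof (rule ccontr)
  assume ne: "w1 \<noteq> w2"
  have "u1 \<noteq> u" using F3 assms by blast
  have "u2 \<noteq> u" using F3 assms by blast
  have wN: "w \<notin> N" "w1 \<notin> N" "w2 \<notin> N" using F1 assms by blast+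
  show False
  proof (cases "u1 = u2")
    case True
    have "w \<noteq> u1" using wN assms by auto
    then show False using sq[of w w1 u1 w2] assms True ne sym unfolding memA by metis
  next
    case False
    have m: "E v0 u1" "E v0 u2" "E u1 w1" "E u2 w2" "w \<noteq> v0" "w1 \<noteq> v0" "w2 \<noteq> v0"
      using assms unfolding memA memN by auto
    have "v0 \<noteq> u1" "v0 \<noteq> u2" "u1 \<noteq> w1" "u2 \<noteq> w2" "w \<noteq> w1" "w \<noteq> w2"
      using m assms(7,8) irr by metis+
    moreover have "u1 \<noteq> w" "u1 \<noteq> w2" "w1 \<noteq> u2" "w \<noteq> u2"
      using wN assms(2,3) by metis+
    ultimately have "distinct [v0,u1,w1,w,w2,u2]"
      using ne False m by auto
    then show False using hex[of u1 w1 w w2 u2] assms sym unfolding memA memN by metis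
  qed
qed

lemma colorA:
  assumes f: "bij_betw f N {1..d}"
  shows "finite U \<Longrightarrow> U \<subseteq> N \<Longrightarrow> \<exists>c. (\<forall>u\<in>U. bij_betw c (A u) ({1..d} - {f u})) \<and>
     (\<forall>w\<in>\<Union>(A`U). \<forall>w'\<in>\<Union>(A`U). E w w' \<longrightarrow> c w \<noteq> c w')"
proof (induction U rule: finite_induct)
  case empty
  then show ?case by auto
next
  case (insert u U)
  then obtain c where c: "\<forall>u\<in>U. bij_betw c (A u) ({1..d} - {f u})"
     "\<forall>w\<in>\<Union>(A`U). \<forall>w'\<in>\<Union>(A`U). E w w' \<longrightarrow> c w \<noteq> c w'" by auto
  have uN: "u \<in> N" and UN: "U \<subseteq> N" using insert by auto
  define forb where "forb w col \<longleftrightarrow> (\<exists>w'\<in>\<Union>(A`U). E w w' \<and> c w' = col)" for w col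
  define C where "C = {1..d} - {f u}"
  have fu: "f u \<in> {1..d}" using f uN bij_betwE by blast
  have cardC: "card C = d - 1" unfolding C_def using fu by simp
  have one: "\<forall>w\<in>A u. \<forall>a b. forb w a \<longrightarrow> forb w b \<longrightarrow> a = b"
  proof (intro ballI allI impI)
    fix w a b assume w: "w \<in> A u" and "forb w a" "forb w b"
    then obtain w1 w2 u1 u2 where "u1 \<in> U" "u2 \<in> U" "w1 \<in> A u1" "w2 \<in> A u2" "E w w1" "E w w2"
      "c w1 = a" "c w2 = b" unfolding forb_def by blast
    then show "a = b" using F4[of u u1 u2 w w1 w2] uN UN w by auto
  qed
  have nonunif: "\<not>(\<exists>x\<in>C. \<forall>w\<in>A u. forb w x)"
  proof
    assume "\<exists>x\<in>C. \<forall>w\<in>A u. forb w x"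
    then obtain cc where cc: "cc \<in> C" "\<forall>w\<in>A u. forb w cc" by blast
    then have "\<forall>w\<in>A u. \<exists>p g. g \<in> U \<and> p \<in> A g \<and> E w p \<and> c p = cc" unfolding forb_def by blast
    then obtain p g where pg: "\<forall>w\<in>A u. g w \<in> U \<and> p w \<in> A (g w) \<and> E w (p w) \<and> c (p w) = cc"
      by metis
    define h where "h w = f (g w)" for w
    have inj: "inj_on h (A u)"
    proof (rule inj_onI)
      fix w1 w2 assume w: "w1 \<in> A u" "w2 \<in> A u" "h w1 = h w2"
      have "g w1 \<in> N" "g w2 \<in> N" using pg w UN by auto
      then have geq: "g w1 = g w2" using w(3) f unfolding h_def bij_betw_def inj_on_def by blast
      have "inj_on c (A (g w1))" using c(1) pg w(1) unfolding bij_betw_def by blast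
      then have peq: "p w1 = p w2" using pg w geq unfolding inj_on_def by metis
      have "g w1 \<in> N" "p w1 \<in> A (g w1)" "E (p w1) w1" "E (p w1) w2"
        using pg w peq UN sym by auto
      then show "w1 = w2"
        using F4[of "g w1" u u "p w1" w1 w2] w uN by blast
    qed
    have sub: "h ` A u \<subseteq> {1..d} - {f u, cc}"
    proof
      fix y assume "y \<in> h ` A u"
      then obtain w where w: "w \<in> A u" "y = h w" by blast
      have gN: "g w \<in> N" "g w \<noteq> u" using pg w insert.hyps(2) UN by auto
      have "f (g w) \<in> {1..d}" using gN f bij_betwE by blast
      moreover have "f (g w) \<noteq> f u" using gN uN f unfolding bij_betw_def inj_on_def by blast
      moreover have "c (p w) \<in> {1..d} - {f (g w)}" using c(1) pg w bij_betwE by blast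
      ultimately show "y \<in> {1..d} - {f u, cc}" using pg w unfolding h_def by auto
    qed
    have "cc \<in> {1..d}" "cc \<noteq> f u" using cc unfolding C_def by auto
    then have "card ({1..d} - {f u, cc}) = d - 2" using fu by (simp add: card_Diff_subset)
    moreover have "card (h ` A u) = d - 1" using card_image[OF inj] cardA[OF uN] by simp
    ultimately have "d - 1 \<le> d - 2" using card_mono[OF _ sub] by fastforce
    then show False using d3 by simp
  qed
  obtain \<sigma> where s: "bij_betw \<sigma> (A u) C" "\<forall>w\<in>A u. \<not> forb w (\<sigma> w)"
  proof -
    have fC: "finite C" unfolding C_def by simp
    have c2: "card C \<ge> 2" using cardC d3 by simp
    have eq: "card (A u) = card C" using cardC cardA[OF uN] by simp
    show ?thesis using avoid[of C "A u" forb, OF fC c2 eq one nonunif] that by blast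
  qed
  define c' where "c' x = (if x \<in> A u then \<sigma> x else c x)" for x
  have b1: "\<forall>u'\<in>insert u U. bij_betw c' (A u') ({1..d} - {f u'})"
  proof
    fix u' assume u': "u' \<in> insert u U"
    show "bij_betw c' (A u') ({1..d} - {f u'})"
    proof (cases "u' = u")
      case True
      then show ?thesis using s(1) unfolding C_def c'_def by (auto intro: bij_betw_cong[THEN iffD1])
    next
      case False
      then have "u' \<in> U" "u' \<in> N" using u' UN by auto
      then have "\<forall>x\<in>A u'. c' x = c x" using F2[of u' u] False uN unfolding c'_def by auto
      then show ?thesis using c(1) \<open>u' \<in> U\<close> bij_betw_cong by metis
    qed
  qed
  have b2: "\<forall>w\<in>\<Union>(A`insert u U). \<forall>w'\<in>\<Union>(A`insert u U). E w w' \<longrightarrow> c' w \<noteq> c' w'"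
  proof (intro ballI impI)
    fix w w' assume w: "w \<in> \<Union>(A`insert u U)" and w': "w' \<in> \<Union>(A`insert u U)" and e: "E w w'"
    show "c' w \<noteq> c' w'"
    proof (cases "w \<in> A u")
      case True
      then have "w' \<notin> A u" using F3 e by blast
      then have "w' \<in> \<Union>(A`U)" using w' by auto
      then have "\<not> (E w w' \<and> c w' = \<sigma> w)" using s(2) True unfolding forb_def by blast
      moreover have "c' w = \<sigma> w" "c' w' = c w'" using True \<open>w' \<notin> A u\<close> unfolding c'_def by auto
      ultimately show ?thesis using e by metis
    next
      case False
      note wn = this
      then have wU: "w \<in> \<Union>(A`U)" using w by auto
      show ?thesis
      proof (cases "w' \<in> A u")
        case True
        then have "\<not> (E w' w \<and> c w = \<sigma> w')" using s(2) wU unfolding forb_def by blast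
        moreover have "c' w' = \<sigma> w'" "c' w = c w" using True wn unfolding c'_def by auto
        ultimately show ?thesis using sym[OF e] by metis
      next
        case False
        then have "w' \<in> \<Union>(A`U)" using w' by auto
        then show ?thesis using wU c(2) e wn False unfolding c'_def by auto
      qed
    qed
  qed
  show ?case using b1 b2 by blast
qed

lemma bcol: "\<exists>c. b_coloring V E (d+1) c"
proof -
  have "card N = card {1..d}" using cardN by simp
  then obtain f where f: "bij_betw f N {1..d}" using finite_same_card_bij finN by blast
  obtain c where c: "\<forall>u\<in>N. bij_betw c (A u) ({1..d} - {f u})"
     "\<forall>w\<in>\<Union>(A`N). \<forall>w'\<in>\<Union>(A`N). E w w' \<longrightarrow> c w \<noteq> c w'"
    using colorA[OF f finN] by blast
  define S where "S = insert v0 (N \<union> \<Union>(A`N))"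
  define c0 where "c0 x = (if x = v0 then d+1 else if x \<in> N then f x else c x)" for x
  have v0N: "v0 \<notin> N" using irr memN by blast
  have AvN: "\<And>u w. u \<in> N \<Longrightarrow> w \<in> A u \<Longrightarrow> w \<noteq> v0 \<and> w \<notin> N" using F1 memA by blast
  have SV: "S \<subseteq> V" unfolding S_def using v0V NV AV by blast
  have fN: "\<And>u. u \<in> N \<Longrightarrow> f u \<in> {1..d}" using f bij_betwE by blast
  have cA: "\<And>u w. u \<in> N \<Longrightarrow> w \<in> A u \<Longrightarrow> c w \<in> {1..d} - {f u}" using c(1) bij_betwE by blast
  have vals: "\<forall>x\<in>S. c0 x \<in> {1..d+1}"
  proof
    fix x assume "x \<in> S"
    then consider "x = v0" | "x \<in> N" "x \<noteq> v0" | u where "u \<in> N" "x \<in> A u" "x \<noteq> v0" "x \<notin> N"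
      unfolding S_def using AvN by blast
    then show "c0 x \<in> {1..d+1}"
      by cases (auto simp: c0_def dest: fN cA)
  qed
  have edgeNA: "\<And>x y. x \<in> N \<Longrightarrow> E x y \<Longrightarrow> y \<noteq> v0 \<Longrightarrow> y \<notin> N \<Longrightarrow> c0 x \<noteq> c0 y"
  proof -
    fix x y assume x: "x \<in> N" and e: "E x y" and y: "y \<noteq> v0" "y \<notin> N"
    have "y \<in> A x" using e y memA by auto
    then have "c y \<noteq> f x" using cA[OF x] by blast
    moreover have "c0 x = f x" "c0 y = c y" using x y v0N unfolding c0_def by auto
    ultimately show "c0 x \<noteq> c0 y" by simp
  qed
  have prp: "\<forall>x\<in>S. \<forall>y\<in>S. E x y \<longrightarrow> c0 x \<noteq> c0 y"
  proof (intro ballI impI)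
    fix x y assume x: "x \<in> S" and y: "y \<in> S" and e: "E x y"
    have nv: "\<And>z. z \<in> N \<Longrightarrow> c0 z \<noteq> d + 1" proof -
      fix z assume z: "z \<in> N"
      then have "z \<noteq> v0" using v0N by auto
      then show "c0 z \<noteq> d + 1" using fN[OF z] z unfolding c0_def by auto
    qed
    consider "x = v0" | "x \<noteq> v0" "x \<in> N" | "x \<noteq> v0" "x \<notin> N" by blast
    then show "c0 x \<noteq> c0 y"
    proof cases
      case 1
      then have "y \<in> N" using e memN by auto
      moreover have "c0 x = d + 1" using 1 unfolding c0_def by simp
      ultimately show ?thesis using nv by metis
    next
      case 2
      show ?thesis
      proof (cases "y = v0")
        case True
        then have "c0 y = d + 1" unfolding c0_def by simp
        then show ?thesis using 2 nv by metis
      next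
        case False
        then show ?thesis
        proof (cases "y \<in> N")
          case True then show ?thesis using tri e 2 memN sym by metis
        next
          case False then show ?thesis using edgeNA 2 e \<open>y \<noteq> v0\<close> by blast
        qed
      qed
    next
      case 3
      then have xA: "x \<in> \<Union>(A`N)" using x unfolding S_def by auto
      show ?thesis
      proof (cases "y = v0")
        case True then show ?thesis using 3 e sym memN by auto
      next
        case yv: False
        show ?thesis
        proof (cases "y \<in> N")
          case True then show ?thesis using edgeNA[of y x] sym[OF e] 3 by auto
        next
          case False
          then have "y \<in> \<Union>(A`N)" using y yv unfolding S_def by auto
          then show ?thesis using c(2) xA e 3 yv False unfolding c0_def by auto
        qed
      qed
    qed
  qed
  have deg: "\<forall>x\<in>V. card (neighbours V E x) < d + 1" using reg unfolding regular_def by auto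
  obtain c' where c': "proper_coloring V E (d+1) c'" "\<forall>x\<in>S. c' x = c0 x"
    using greedy[OF sg deg SV vals prp] by blast
  have cv0: "c' v0 = d + 1"
  proof -
    have "v0 \<in> S" unfolding S_def by simp
    then have "c' v0 = c0 v0" using c'(2) by blast
    then show ?thesis unfolding c0_def by simp
  qed
  have cN: "\<And>x. x \<in> N \<Longrightarrow> c' x = f x"
  proof -
    fix x assume x: "x \<in> N"
    then have "x \<in> S" "x \<noteq> v0" using v0N unfolding S_def by auto
    then have "c' x = c0 x" using c'(2) by blast
    then show "c' x = f x" using x \<open>x \<noteq> v0\<close> unfolding c0_def by simp
  qed
  have cAu: "\<And>u w. u \<in> N \<Longrightarrow> w \<in> A u \<Longrightarrow> c' w = c w"
  proof -
    fix u w assume u: "u \<in> N" and w: "w \<in> A u"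
    then have "w \<in> S" "w \<noteq> v0" "w \<notin> N" using AvN unfolding S_def by auto
    then have "c' w = c0 w" using c'(2) by blast
    then show "c' w = c w" using \<open>w \<noteq> v0\<close> \<open>w \<notin> N\<close> unfolding c0_def by simp
  qed
  have e1: "{1..d+1} = insert (d+1) {1..d}" using atLeastAtMostSuc_conv[of 1 d] by simp
  have bv: "\<exists>v\<in>V. c' v = i \<and> c' ` closed_nbhd V E v = {1..d+1}" if i: "i \<in> {1..d+1}" for i
  proof (cases "i = d + 1")
    case True
    have "closed_nbhd V E v0 = insert v0 N" unfolding closed_nbhd_def N_def by simp
    moreover have "c' ` N = f ` N" using cN by (rule image_cong[OF refl])
    moreover have "f ` N = {1..d}" using bij_betw_imp_surj_on[OF f] .
    ultimately have "c' ` closed_nbhd V E v0 = insert (d+1) {1..d}" using cv0 by (simp only: image_insert)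
    then have "c' ` closed_nbhd V E v0 = {1..d+1}" using e1 by simp
    then show ?thesis using True v0V cv0 by blast
  next
    case False
    then have iin: "i \<in> {1..d}" using i by auto
    then obtain u where u: "u \<in> N" "f u = i" using bij_betw_imp_surj_on[OF f] by (metis imageE)
    have "v0 \<in> neighbours V E u" using u v0V sym unfolding memN neighbours_def by auto
    then have "closed_nbhd V E u = insert u (insert v0 (A u))" unfolding closed_nbhd_def A_def by auto
    moreover have "c' ` A u = {1..d} - {i}"
    proof -
      have "c' ` A u = c ` A u" using cAu[OF u(1)] by (rule image_cong[OF refl])
      then show ?thesis using bij_betw_imp_surj_on[OF c(1)[rule_format, OF u(1)]] u(2) by simp
    qed
    moreover have "c' u = i" using cN u by simp
    ultimately have "c' ` closed_nbhd V E u = insert i (insert (d+1) ({1..d} - {i}))" using cv0 by (simp only: image_insert)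
    also have "\<dots> = insert (d+1) (insert i ({1..d} - {i}))" by (rule insert_commute)
    also have "insert i ({1..d} - {i}) = {1..d}" using iin by blast
    finally have "c' ` closed_nbhd V E u = {1..d+1}" using e1 by simp
    then show ?thesis using u \<open>c' u = i\<close> NV by blast
  qed
  show ?thesis using c'(1) bv unfolding b_coloring_def by blast
qed

end

lemma ub:
  assumes sg: "simple_graph V E" and reg: "regular V E d" and b: "b_coloring V E k c"
  shows "k \<le> d + 1"
proof (cases "k = 0")
  case False
  then have "1 \<in> {1..k}" by auto
  then obtain v where v: "v \<in> V" "c ` closed_nbhd V E v = {1..k}" using b unfolding b_coloring_def by blast
  have fin: "finite (neighbours V E v)" using sg unfolding simple_graph_def neighbours_def by auto
  have "k = card (c ` closed_nbhd V E v)" using v by simp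
  also have "\<dots> \<le> card (closed_nbhd V E v)"
    using fin unfolding closed_nbhd_def by (intro card_image_le) auto
  also have "\<dots> \<le> Suc (card (neighbours V E v))" unfolding closed_nbhd_def using fin by (simp add: card_insert_if)
  also have "\<dots> = d + 1" using reg v unfolding regular_def by auto
  finally show ?thesis .
qed simp

theorem mainTheorem3:
  fixes V :: "'a set" and E :: "'a \<Rightarrow> 'a \<Rightarrow> bool" and d :: nat
  assumes "simple_graph V E"
    and "d \<ge> 7"
    and "regular V E d"
    and "girth V E = 5"
    and "\<exists>v\<in>V. \<not> on_cycle_of_length V E 6 v"
  shows "b_chromatic_number V E = d + 1"
proof -
  obtain v0 where v0: "v0 \<in> V" "\<not> on_cycle_of_length V E 6 v0" using assms(5) by blast
  have ex: "\<exists>k. has_cycle_of_length V E k"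
  proof (rule ccontr)
    assume "\<not> ?thesis"
    then have "girth V E = \<infinity>" unfolding girth_def by simp
    then show False using assms(4) by simp
  qed
  then have "enat (LEAST k. has_cycle_of_length V E k) = 5" using assms(4) unfolding girth_def by simp
  then have L: "(LEAST k. has_cycle_of_length V E k) = 5" by (simp add: numeral_eq_enat)
  have n3: "\<not> has_cycle_of_length V E 3" using Least_le[of "has_cycle_of_length V E" 3] L by force
  have n4: "\<not> has_cycle_of_length V E 4" using Least_le[of "has_cycle_of_length V E" 4] L by force
  interpret G5 V E d v0 using assms(1,2,3) v0 n3 n4 by unfold_locales auto
  have "b_chromatic_number V E = Max {k. \<exists>c. b_coloring V E k c}" unfolding b_chromatic_number_def ..
  also have "\<dots> = d + 1"
  proof (rule Max_eqI)
    show "finite {k. \<exists>c. b_coloring V E k c}"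
      by (rule finite_subset[of _ "{..d+1}"]) (auto dest: ub[OF assms(1,3)])
    show "\<And>y. y \<in> {k. \<exists>c. b_coloring V E k c} \<Longrightarrow> y \<le> d + 1" using ub[OF assms(1,3)] by blast
    show "d + 1 \<in> {k. \<exists>c. b_coloring V E k c}" using bcol by blast
  qed
  finally show ?thesis .
qed

end
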